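(* In the signal design problem described in the context, define the congestion level $\chi=\frac{\min\{Vk_0,C\}}{\min\{C,(K-k_0)W\}}$. Then the optimal cycle lengths are: (1) Very sparse traffic, $\chi\in[0,\pi_0)$: multiple optimal cycle lengths $T^*=\frac1{j_1}\frac LV$ for positive integers $j_1$ with $Vk_0\le(1-\frac{2\delta}{T^*})\pi_0C$. (2) Sparse traffic, $\chi\in[\pi_0,1)$: a unique optimal cycle length $T^*=\chi\frac{L}{\pi_0V}+2\delta$. (3) Critical traffic, $\chi=1$: a unique optimal cycle length $T^*=\infty$. (4) Dense traffic, $\chi\in(1,\frac1{\pi_0}]$: a unique optimal cycle length $T^*=\frac1\chi\frac{L}{\pi_0W}+2\delta$. (5) Very dense traffic, $\chi\in(\frac1{\pi_0},\infty)$: multiple optimal cycle lengths $T^*=\frac1{j_2}\frac LW$ for positive integers $j_2$ with $(K-k_0)W\le(1-\frac{2\delta}{T^*})\pi_0C$.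
   Context: Signalized ring road of length $L>0$ with LWR traffic, triangular fundamental diagram $Q(k)=\min\{Vk,(K-k)W\}$, $\bar K=\frac{W}{V+W}K$, $C=V\bar K$, average density $k_0\in[0,K]$, pretimed two-phase signal with cycle length $T$. With a start-up lost time $\delta>0$ per phase and a fixed allocation ratio $\pi_0\in(0,1)$, the effective green ratio is $\pi=(1-\frac{2\delta}T)\pi_0$, $T\ge2\delta$. In stationary states the average flow-rate is $\bar g=\min\{\phi_1,\pi C,\phi_2\}$ with $\phi_1=\frac{k_0}{k_1}\pi C$, $\phi_2=\frac{K-k_0}{K-k_2}\pi C$, where $\frac LV=(j_1+\alpha_1)T$, $j_1=\lfloor L/(VT)\rfloor$, $0\le\alpha_1<1$, $\frac LW=(j_2+\alpha_2)T$, $j_2=\lfloor L/(WT)\rfloor$, $0\le\alpha_2<1$, $k_1=\frac{j_1+\min\{\alpha_1/\pi,1\}}{j_1+\alpha_1}\pi\bar K$, $k_2=K-\frac{j_2+\min\{\alpha_2/\pi,1\}}{j_2+\alpha_2}\pi\frac CW$. Assuming $L/V$ and $L/W$ are much larger than $2\delta$, $\pi$ is replaced by $\pi_0$ in $\phi_1,\phi_2$ (but not in the term $\pi C=(1-\frac{2\delta}T)\pi_0C$); an optimal cycle length is a maximizer over $T\ge2\delta$ of $\min\{\phi_1,(1-\frac{2\delta}T)\pi_0C,\phi_2\}$. *)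

theory Defs
  imports "HOL-Analysis.Analysis"
begin

text \<open>Signalized ring road, triangular fundamental diagram. Parameters:
  free-flow speed V, shock-wave speed W, jam density K, average density k0,
  ring length L, start-up lost time delta, allocation ratio pi0, cycle length T.\<close>

definition Kbar :: "real \<Rightarrow> real \<Rightarrow> real \<Rightarrow> real" where
  "Kbar V W K = W / (V + W) * K"

definition Cap :: "real \<Rightarrow> real \<Rightarrow> real \<Rightarrow> real" where
  "Cap V W K = V * Kbar V W K"

definition jj :: "real \<Rightarrow> real \<Rightarrow> real \<Rightarrow> real" where
  "jj L U T = real_of_int \<lfloor>L / (U * T)\<rfloor>"

definition alph :: "real \<Rightarrow> real \<Rightarrow> real \<Rightarrow> real" where
  "alph L U T = L / (U * T) - jj L U T"

text \<open>k1 and k2 with pi replaced by pi0 (as in the approximation of the paper).\<close>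
definition k1 :: "real \<Rightarrow> real \<Rightarrow> real \<Rightarrow> real \<Rightarrow> real \<Rightarrow> real \<Rightarrow> real" where
  "k1 V W K L pi0 T =
     (jj L V T + min (alph L V T / pi0) 1) / (jj L V T + alph L V T) * pi0 * Kbar V W K"

definition k2 :: "real \<Rightarrow> real \<Rightarrow> real \<Rightarrow> real \<Rightarrow> real \<Rightarrow> real \<Rightarrow> real" where
  "k2 V W K L pi0 T =
     K - (jj L W T + min (alph L W T / pi0) 1) / (jj L W T + alph L W T) * pi0 * (Cap V W K / W)"

definition phi1 :: "real \<Rightarrow> real \<Rightarrow> real \<Rightarrow> real \<Rightarrow> real \<Rightarrow> real \<Rightarrow> real \<Rightarrow> real" where
  "phi1 V W K k0 L pi0 T = k0 / k1 V W K L pi0 T * pi0 * Cap V W K"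

definition phi2 :: "real \<Rightarrow> real \<Rightarrow> real \<Rightarrow> real \<Rightarrow> real \<Rightarrow> real \<Rightarrow> real \<Rightarrow> real" where
  "phi2 V W K k0 L pi0 T = (K - k0) / (K - k2 V W K L pi0 T) * pi0 * Cap V W K"

text \<open>Objective: average flow-rate as a function of the cycle length T.\<close>
definition objective :: "real \<Rightarrow> real \<Rightarrow> real \<Rightarrow> real \<Rightarrow> real \<Rightarrow> real \<Rightarrow> real \<Rightarrow> real \<Rightarrow> real" where
  "objective V W K k0 L \<delta> pi0 T =
     min (min (phi1 V W K k0 L pi0 T) ((1 - 2 * \<delta> / T) * pi0 * Cap V W K))
         (phi2 V W K k0 L pi0 T)"

definition optimal_cycle :: "real \<Rightarrow> real \<Rightarrow> real \<Rightarrow> real \<Rightarrow> real \<Rightarrow> real \<Rightarrow> real \<Rightarrow> real \<Rightarrow> bool" where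
  "optimal_cycle V W K k0 L \<delta> pi0 T \<longleftrightarrow>
     2 * \<delta> \<le> T \<and> (\<forall>T'. 2 * \<delta> \<le> T' \<longrightarrow> objective V W K k0 L \<delta> pi0 T' \<le> objective V W K k0 L \<delta> pi0 T)"

definition congestion :: "real \<Rightarrow> real \<Rightarrow> real \<Rightarrow> real \<Rightarrow> real" where
  "congestion V W K k0 = min (V * k0) (Cap V W K) / min (Cap V W K) ((K - k0) * W)"

end

theory Submission
  imports Defs
begin


definition FF :: "real \<Rightarrow> real \<Rightarrow> real" where
  "FF p x = x / (of_int \<lfloor>x\<rfloor> + min ((x - of_int \<lfloor>x\<rfloor>)/p) 1)"

lemma FF_den_pos:
  assumes "0 < x" "0 < p"
  shows "0 < of_int \<lfloor>x\<rfloor> + min ((x - of_int \<lfloor>x\<rfloor>)/p) (1::real)"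
proof -
  have f0: "\<lfloor>x\<rfloor> \<ge> 0" using assms by simp
  have a0: "x - of_int \<lfloor>x\<rfloor> \<ge> 0" by linarith
  show ?thesis
  proof (cases "\<lfloor>x\<rfloor> = 0")
    case True
    then show ?thesis using assms by simp
  next
    case False
    then have "of_int \<lfloor>x\<rfloor> \<ge> (1::real)" using f0 by linarith
    moreover have "min ((x - of_int \<lfloor>x\<rfloor>)/p) 1 \<ge> 0" using a0 assms by simp
    ultimately show ?thesis by linarith
  qed
qed

lemma FF_le1:
  assumes "0 < x" "0 < p" "p < 1"
  shows "FF p x \<le> 1"
proof -
  have D: "0 < of_int \<lfloor>x\<rfloor> + min ((x - of_int \<lfloor>x\<rfloor>)/p) (1::real)" using FF_den_pos assms by blast
  have a0: "x - of_int \<lfloor>x\<rfloor> \<ge> 0" "x - of_int \<lfloor>x\<rfloor> < 1" by linarith+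
  have "x - of_int \<lfloor>x\<rfloor> \<le> (x - of_int \<lfloor>x\<rfloor>)/p"
    using a0 assms by (simp add: le_divide_eq mult_left_le)
  hence "x \<le> of_int \<lfloor>x\<rfloor> + min ((x - of_int \<lfloor>x\<rfloor>)/p) 1" using a0 by linarith
  thus ?thesis using D unfolding FF_def by simp
qed

lemma FF_ge:
  assumes "0 < x" "0 < p" "p < 1"
  shows "p \<le> FF p x"
proof -
  have D: "0 < of_int \<lfloor>x\<rfloor> + min ((x - of_int \<lfloor>x\<rfloor>)/p) (1::real)" using FF_den_pos assms by blast
  have f0: "\<lfloor>x\<rfloor> \<ge> 0" using assms by simp
  have a0: "x - of_int \<lfloor>x\<rfloor> \<ge> 0" by linarith
  have "p * min ((x - of_int \<lfloor>x\<rfloor>)/p) 1 = min (x - of_int \<lfloor>x\<rfloor>) p"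
    using assms by (simp add: min_def)
  moreover have "p * of_int \<lfloor>x\<rfloor> \<le> of_int \<lfloor>x\<rfloor>" using f0 assms by (simp add: mult_left_le_one_le)
  ultimately have "p * (of_int \<lfloor>x\<rfloor> + min ((x - of_int \<lfloor>x\<rfloor>)/p) 1) \<le> x"
    by (simp add: distrib_left)
  thus ?thesis using D unfolding FF_def by (simp add: le_divide_eq)
qed

lemma FF_eq1:
  assumes "0 < x" "0 < p" "p < 1" "1 \<le> FF p x"
  shows "\<exists>n::nat. n > 0 \<and> x = real n"
proof -
  have D: "0 < of_int \<lfloor>x\<rfloor> + min ((x - of_int \<lfloor>x\<rfloor>)/p) (1::real)" using FF_den_pos assms by blast
  have f0: "\<lfloor>x\<rfloor> \<ge> 0" using assms by simp
  have a0: "x - of_int \<lfloor>x\<rfloor> \<ge> 0" "x - of_int \<lfloor>x\<rfloor> < 1" by linarith+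
  have "of_int \<lfloor>x\<rfloor> + min ((x - of_int \<lfloor>x\<rfloor>)/p) 1 \<le> x"
    using assms(4) D unfolding FF_def by (simp add: le_divide_eq)
  hence "min ((x - of_int \<lfloor>x\<rfloor>)/p) 1 \<le> x - of_int \<lfloor>x\<rfloor>" by linarith
  hence "x - of_int \<lfloor>x\<rfloor> = 0"
  proof -
    assume m: "min ((x - of_int \<lfloor>x\<rfloor>)/p) 1 \<le> x - of_int \<lfloor>x\<rfloor>"
    show ?thesis
    proof (rule ccontr)
      assume ne: "x - of_int \<lfloor>x\<rfloor> \<noteq> 0"
      hence pos: "x - of_int \<lfloor>x\<rfloor> > 0" using a0 by linarith
      have "x - of_int \<lfloor>x\<rfloor> < (x - of_int \<lfloor>x\<rfloor>)/p"
        using pos assms by (simp add: less_divide_eq)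
      thus False using m a0 by (simp add: min_def split: if_splits)
    qed
  qed
  hence "x = of_int \<lfloor>x\<rfloor>" by simp
  moreover have "\<lfloor>x\<rfloor> > 0" using \<open>x = of_int \<lfloor>x\<rfloor>\<close> assms(1) by linarith
  ultimately show ?thesis
    by (intro exI[of _ "nat \<lfloor>x\<rfloor>"]) auto
qed

lemma FF_nat:
  assumes "n > 0" "0 < p"
  shows "FF p (real n) = 1"
  using assms unfolding FF_def by simp

lemma FF_small:
  assumes "0 < x" "x < 1" "0 < p" "p < 1"
  shows "FF p x = max p x"
proof -
  have fl: "\<lfloor>x\<rfloor> = 0" using assms by (simp add: floor_eq_iff)
  show ?thesis
  proof (cases "x \<le> p")
    case True
    then have "x/p \<le> 1" using assms by simp
    then show ?thesis using True assms unfolding FF_def fl by (simp add: min_def max_def)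
  next
    case False
    then have "\<not> x/p \<le> 1" using assms by (simp add: divide_le_eq)
    then show ?thesis using False assms unfolding FF_def fl by (simp add: min_def max_def)
  qed
qed

lemma Kbar_pos: "V > 0 \<Longrightarrow> W > 0 \<Longrightarrow> K > 0 \<Longrightarrow> Kbar V W K > 0"
  unfolding Kbar_def by simp

lemma Cap_pos: "V > 0 \<Longrightarrow> W > 0 \<Longrightarrow> K > 0 \<Longrightarrow> Cap V W K > 0"
  unfolding Cap_def using Kbar_pos by simp

lemma phi1_eq:
  assumes "V > 0" "W > 0" "K > 0" "L > 0" "T > 0" "0 < p" "p < 1"
  shows "phi1 V W K k0 L p T = V * k0 * FF p (L/(V*T))"
proof -
  define x where "x = L/(V*T)"
  have x: "x > 0" using assms unfolding x_def by simp
  define D where "D = of_int \<lfloor>x\<rfloor> + min ((x - of_int \<lfloor>x\<rfloor>)/p) (1::real)"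
  have D: "D > 0" unfolding D_def using FF_den_pos x assms by blast
  have kb: "Kbar V W K > 0" using Kbar_pos assms by blast
  have "k1 V W K L p T = D / x * p * Kbar V W K"
    unfolding k1_def jj_def alph_def D_def x_def by simp
  hence "phi1 V W K k0 L p T = k0 / (D / x * p * Kbar V W K) * p * (V * Kbar V W K)"
    unfolding phi1_def Cap_def by simp
  also have "\<dots> = V * k0 * (x / D)" using D x kb assms by (simp add: field_simps)
  finally show ?thesis unfolding FF_def D_def x_def .
qed

lemma phi2_eq:
  assumes "V > 0" "W > 0" "K > 0" "L > 0" "T > 0" "0 < p" "p < 1"
  shows "phi2 V W K k0 L p T = (K - k0) * W * FF p (L/(W*T))"
proof -
  define x where "x = L/(W*T)"
  have x: "x > 0" using assms unfolding x_def by simp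
  define D where "D = of_int \<lfloor>x\<rfloor> + min ((x - of_int \<lfloor>x\<rfloor>)/p) (1::real)"
  have D: "D > 0" unfolding D_def using FF_den_pos x assms by blast
  have kb: "Cap V W K > 0" using Cap_pos assms by blast
  have "K - k2 V W K L p T = D / x * p * (Cap V W K / W)"
    unfolding k2_def jj_def alph_def D_def x_def by simp
  hence "phi2 V W K k0 L p T = (K - k0) / (D / x * p * (Cap V W K / W)) * p * Cap V W K"
    unfolding phi2_def by simp
  also have "\<dots> = (K - k0) * W * (x / D)" using D x kb assms by (simp add: field_simps)
  finally show ?thesis unfolding FF_def D_def x_def .
qed



lemma opt_multi:
  fixes h :: "real \<Rightarrow> real"
  assumes U: "U > 0" and L: "L > 0" and A: "A > 0" and C: "C > 0" and p: "p > 0" "p < 1" and d: "\<delta> > 0"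
  and h: "\<And>T. 2*\<delta> \<le> T \<Longrightarrow> h T = min (A * FF p (L/(U*T))) ((1 - 2*\<delta>/T)*p*C)"
  and feas: "A \<le> (1 - 2*\<delta>/(L/U)) * p * C"
  shows "{T. 2*\<delta> \<le> T \<and> (\<forall>T'. 2*\<delta> \<le> T' \<longrightarrow> h T' \<le> h T)} =
         {T. \<exists>j::nat. j>0 \<and> T = L/(real j*U) \<and> A \<le> (1-2*\<delta>/T)*p*C}"
proof -
  have hle: "h T \<le> A" if "2*\<delta> \<le> T" for T
  proof -
    have "T > 0" using that d by linarith
    hence "FF p (L/(U*T)) \<le> 1" using FF_le1 U L p by simp
    hence "A * FF p (L/(U*T)) \<le> A" using A by (simp add: mult_left_le)
    thus ?thesis using h[OF that] by linarith
  qed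
  have inS: "2*\<delta> \<le> T \<and> h T = A" if "T \<in> {T. \<exists>j::nat. j>0 \<and> T = L/(real j*U) \<and> A \<le> (1-2*\<delta>/T)*p*C}" for T
  proof -
    have "\<exists>j::nat. j>0 \<and> T = L/(real j*U) \<and> A \<le> (1-2*\<delta>/T)*p*C" using that by (simp only: mem_Collect_eq)
    then obtain j::nat where j: "j > 0" "T = L/(real j*U)" "A \<le> (1-2*\<delta>/T)*p*C" by (elim exE conjE) auto
    have T0: "T > 0" using j U L by simp
    have pc: "p*C > 0" using p C by simp
    have "(1-2*\<delta>/T)*(p*C) > 0" using j(3) A by (simp add: mult.assoc)
    hence "1-2*\<delta>/T > 0" using pc by (metis zero_less_mult_pos2)
    hence "2*\<delta>/T < 1" by linarith
    hence T2: "2*\<delta> \<le> T" using T0 by (simp add: divide_less_eq)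
    have "L/(U*T) = real j" using j(1) U L unfolding j(2) by simp
    hence "FF p (L/(U*T)) = 1" using FF_nat[OF j(1) p(1)] by simp
    thus ?thesis using h[OF T2] j(3) T2 by (simp add: min_def)
  qed
  show ?thesis
  proof (rule set_eqI, rule iffI)
    fix T assume "T \<in> {T. 2*\<delta> \<le> T \<and> (\<forall>T'. 2*\<delta> \<le> T' \<longrightarrow> h T' \<le> h T)}"
    hence T2: "2*\<delta> \<le> T" and opt: "\<And>T'. 2*\<delta> \<le> T' \<Longrightarrow> h T' \<le> h T" by (simp_all only: mem_Collect_eq)
    have T0: "T > 0" using T2 d by linarith
    have "L/U \<in> {T. \<exists>j::nat. j>0 \<and> T = L/(real j*U) \<and> A \<le> (1-2*\<delta>/T)*p*C}"
      using feas by (intro CollectI exI[of _ 1]) simp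
    from inS[OF this] have "A \<le> h T" using opt[of "L/U"] by simp
    hence a1: "A \<le> A * FF p (L/(U*T))" and a2: "A \<le> (1-2*\<delta>/T)*p*C" using h[OF T2] by auto
    have "1 \<le> FF p (L/(U*T))" using a1 A by simp
    moreover have "L/(U*T) > 0" using U L T0 by simp
    ultimately obtain n::nat where n: "n > 0" "L/(U*T) = real n" using FF_eq1[OF _ p(1) p(2)] by blast
    hence "T = L/(real n*U)" using U T0 by (simp add: field_simps)
    thus "T \<in> {T. \<exists>j::nat. j>0 \<and> T = L/(real j*U) \<and> A \<le> (1-2*\<delta>/T)*p*C}" using n a2
      by (intro CollectI exI[of _ n] conjI)
  next
    fix T assume "T \<in> {T. \<exists>j::nat. j>0 \<and> T = L/(real j*U) \<and> A \<le> (1-2*\<delta>/T)*p*C}"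
    from inS[OF this] hle show "T \<in> {T. 2*\<delta> \<le> T \<and> (\<forall>T'. 2*\<delta> \<le> T' \<longrightarrow> h T' \<le> h T)}"
      by (simp only: mem_Collect_eq) simp
  qed
qed

lemma opt_unique:
  fixes h :: "real \<Rightarrow> real"
  assumes U: "U > 0" and L: "L > 0" and A: "A > 0" and C: "C > 0" and p: "p > 0" "p < 1" and d: "\<delta> > 0"
  and h: "\<And>T. 2*\<delta> \<le> T \<Longrightarrow> h T = min (A * FF p (L/(U*T))) ((1 - 2*\<delta>/T)*p*C)"
  and r1: "p*C \<le> A" and r2: "A < C" and big: "2*\<delta> < (1 - A/C)*L/(p*U)"
  shows "{T. 2*\<delta> \<le> T \<and> (\<forall>T'. 2*\<delta> \<le> T' \<longrightarrow> h T' \<le> h T)} = {A/C * L/(p*U) + 2*\<delta>}"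
proof -
  define r where "r = A/C"
  have rp: "p \<le> r" using r1 C unfolding r_def by (simp add: le_divide_eq)
  have r1': "r < 1" using r2 C unfolding r_def by simp
  have r0: "r > 0" using A C unfolding r_def by simp
  define Ts where "Ts = r * L/(p*U) + 2*\<delta>"
  have Ts2: "2*\<delta> < Ts" using r0 L p U unfolding Ts_def by simp
  have Ts0: "Ts > 0" using Ts2 d by linarith
  define xs where "xs = L/(U*Ts)"
  have xs0: "xs > 0" using L U Ts0 unfolding xs_def by simp
  have "L \<le> r*L/p" using rp p L by (simp add: le_divide_eq mult_right_mono)
  moreover have "U*Ts = r*L/p + U*(2*\<delta>)" unfolding Ts_def using U p by (simp add: field_simps)
  moreover have "U*(2*\<delta>) > 0" using U d by simp
  ultimately have "L < U*Ts" by linarith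
  hence xs1: "xs < 1" unfolding xs_def using U Ts0 by simp
  have "2*\<delta>*(p*U) < (1 - r)*L" using big p U unfolding r_def by (simp add: less_divide_eq)
  hence "r*L + 2*\<delta>*(p*U) < L" by (simp add: algebra_simps)
  moreover have "p*U*Ts = r*L + 2*\<delta>*(p*U)" unfolding Ts_def using p U by (simp add: field_simps)
  ultimately have "p*U*Ts < L" by linarith
  hence xsp: "p < xs" unfolding xs_def using U Ts0 by (simp add: less_divide_eq mult.commute mult.left_commute)
  have e1: "Ts - 2*\<delta> = r*L/(p*U)" by (simp add: Ts_def)
  have e2: "1 - 2*\<delta>/Ts = (Ts - 2*\<delta>)/Ts" using Ts0 by (simp add: field_simps)
  have sTs: "(1 - 2*\<delta>/Ts)*p*C = A * xs"
    unfolding e2 e1 xs_def r_def using p U C L Ts0 by (simp add: field_simps)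
  have hTs: "h Ts = A * xs" using h[of Ts] Ts2 FF_small[OF xs0 xs1 p] xsp sTs
    unfolding xs_def by (simp add: max_def)
  have lt: "h T < A * xs" if "2*\<delta> \<le> T" "T \<noteq> Ts" for T
  proof -
    have T0: "T > 0" using that d by linarith
    show ?thesis
    proof (cases "T < Ts")
      case True
      have "2*\<delta>/Ts < 2*\<delta>/T" using True T0 d by (simp add: frac_less2)
      hence "(1 - 2*\<delta>/T)*p*C < (1 - 2*\<delta>/Ts)*p*C" using p C by simp
      thus ?thesis using h[OF that(1)] sTs by linarith
    next
      case False
      hence TT: "Ts < T" using that by linarith
      define x where "x = L/(U*T)"
      have x0: "x > 0" using L U T0 unfolding x_def by simp
      have "x < xs" unfolding x_def xs_def using L U Ts0 TT
        by (simp add: frac_less2)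
      hence x1: "x < 1" using xs1 by linarith
      have "max p x < xs" using \<open>x < xs\<close> xsp by simp
      hence "A * FF p x < A * xs" using FF_small[OF x0 x1 p] A by simp
      thus ?thesis using h[OF that(1)] unfolding x_def by linarith
    qed
  qed
  show ?thesis
  proof (rule set_eqI, rule iffI)
    fix T assume "T \<in> {T. 2*\<delta> \<le> T \<and> (\<forall>T'. 2*\<delta> \<le> T' \<longrightarrow> h T' \<le> h T)}"
    hence T2: "2*\<delta> \<le> T" and opt: "\<And>T'. 2*\<delta> \<le> T' \<Longrightarrow> h T' \<le> h T" by (simp_all only: mem_Collect_eq)
    have "h Ts \<le> h T" using opt Ts2 by simp
    hence "T = Ts" using lt[OF T2] hTs by fastforce
    thus "T \<in> {A/C * L/(p*U) + 2*\<delta>}" unfolding Ts_def r_def by simp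
  next
    fix T assume "T \<in> {A/C * L/(p*U) + 2*\<delta>}"
    hence "T = Ts" unfolding Ts_def r_def by simp
    moreover have "h T' \<le> h Ts" if "2*\<delta> \<le> T'" for T'
      using lt[OF that] hTs by (cases "T' = Ts") auto
    ultimately show "T \<in> {T. 2*\<delta> \<le> T \<and> (\<forall>T'. 2*\<delta> \<le> T' \<longrightarrow> h T' \<le> h T)}" using Ts2 by auto
  qed
qed



lemma obj_eq:
  assumes "V > 0" "W > 0" "K > 0" "L > 0" "T > 0" "0 < p" "p < 1"
  shows "objective V W K k0 L \<delta> p T =
    min (min (V*k0*FF p (L/(V*T))) ((1 - 2*\<delta>/T)*p*Cap V W K)) ((K-k0)*W*FF p (L/(W*T)))"
  unfolding objective_def using phi1_eq[OF assms] phi2_eq[OF assms] by simp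

lemma CapKbar:
  assumes "V > 0" "W > 0"
  shows "Cap V W K = V * Kbar V W K" "Cap V W K = W * (K - Kbar V W K)"
  using assms unfolding Cap_def Kbar_def by (auto simp: field_simps)

lemma sle:
  fixes \<delta> T p C :: real
  assumes "2*\<delta> \<le> T" "\<delta> > 0" "p > 0" "C > 0"
  shows "(1 - 2*\<delta>/T)*p*C \<le> p*C"
proof -
  have "T > 0" using assms by linarith
  hence "2*\<delta>/T \<ge> 0" using assms by simp
  thus ?thesis using assms by (simp add: mult_right_le_one_le mult.assoc)
qed

lemma obj_lt:
  assumes "V > 0" "W > 0" "K > 0" "L > 0" "2*\<delta> \<le> T" "\<delta> > 0" "0 < p" "p < 1" "k0 < Kbar V W K"
  shows "objective V W K k0 L \<delta> p T = min (V*k0*FF p (L/(V*T))) ((1 - 2*\<delta>/T)*p*Cap V W K)"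
proof -
  have T0: "T > 0" using assms by linarith
  have C: "Cap V W K > 0" using Cap_pos assms by blast
  have "W*k0 < W*Kbar V W K" using assms by simp
  hence BC: "(K-k0)*W > Cap V W K" using CapKbar(2)[OF assms(1,2), of K] by (simp add: algebra_simps)
  have y: "L/(W*T) > 0" using assms T0 by simp
  have "p \<le> FF p (L/(W*T))" using FF_ge[OF y] assms by simp
  hence "(K-k0)*W*p \<le> (K-k0)*W*FF p (L/(W*T))" using BC C by (simp add: mult_left_mono)
  moreover have "p*Cap V W K < (K-k0)*W*p" using BC assms by simp
  moreover have "(1 - 2*\<delta>/T)*p*Cap V W K \<le> p*Cap V W K" using sle assms C by blast
  ultimately have "(1 - 2*\<delta>/T)*p*Cap V W K \<le> (K-k0)*W*FF p (L/(W*T))" by linarith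
  thus ?thesis using obj_eq[OF assms(1-4) T0 assms(7,8)] by (simp add: min_def)
qed

lemma obj_gt:
  assumes "V > 0" "W > 0" "K > 0" "L > 0" "2*\<delta> \<le> T" "\<delta> > 0" "0 < p" "p < 1" "k0 > Kbar V W K"
  shows "objective V W K k0 L \<delta> p T = min ((K-k0)*W*FF p (L/(W*T))) ((1 - 2*\<delta>/T)*p*Cap V W K)"
proof -
  have T0: "T > 0" using assms by linarith
  have C: "Cap V W K > 0" using Cap_pos assms by blast
  have "V*k0 > V*Kbar V W K" using assms by simp
  hence AC: "V*k0 > Cap V W K" using CapKbar(1)[OF assms(1,2), of K] by (simp add: algebra_simps)
  have y: "L/(V*T) > 0" using assms T0 by simp
  have "p \<le> FF p (L/(V*T))" using FF_ge[OF y] assms by simp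
  hence "V*k0*p \<le> V*k0*FF p (L/(V*T))" using AC C by (simp add: mult_left_mono)
  moreover have "p*Cap V W K < V*k0*p" using AC assms by simp
  moreover have "(1 - 2*\<delta>/T)*p*Cap V W K \<le> p*Cap V W K" using sle assms C by blast
  ultimately have "(1 - 2*\<delta>/T)*p*Cap V W K \<le> V*k0*FF p (L/(V*T))" by linarith
  thus ?thesis using obj_eq[OF assms(1-4) T0 assms(7,8)] by (simp add: min_def)
qed

lemma obj_eqc:
  assumes "V > 0" "W > 0" "K > 0" "L > 0" "2*\<delta> \<le> T" "\<delta> > 0" "0 < p" "p < 1" "k0 = Kbar V W K"
  shows "objective V W K k0 L \<delta> p T = (1 - 2*\<delta>/T)*p*Cap V W K"
proof -
  have T0: "T > 0" using assms by linarith
  have C: "Cap V W K > 0" using Cap_pos assms by blast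
  have AC: "V*k0 = Cap V W K" using CapKbar(1)[OF assms(1,2), of K] assms by (simp add: algebra_simps)
  have BC: "(K-k0)*W = Cap V W K" using CapKbar(2)[OF assms(1,2), of K] assms by (simp add: algebra_simps)
  have x: "L/(V*T) > 0" and y: "L/(W*T) > 0" using assms T0 by simp_all
  have "p \<le> FF p (L/(V*T))" using FF_ge[OF x] assms by simp
  hence 1: "Cap V W K*p \<le> V*k0*FF p (L/(V*T))" using AC C by (simp add: mult_left_mono)
  have "p \<le> FF p (L/(W*T))" using FF_ge[OF y] assms by simp
  hence 2: "Cap V W K*p \<le> (K-k0)*W*FF p (L/(W*T))" using BC C by (simp add: mult_left_mono)
  have "(1 - 2*\<delta>/T)*p*Cap V W K \<le> p*Cap V W K" using sle assms C by blast
  thus ?thesis using 1 2 obj_eq[OF assms(1-4) T0 assms(7,8)] by (simp add: min_def mult.commute)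
qed

lemma feas_bound:
  fixes A p C U \<delta> L :: real
  assumes "A < p*C" "p > 0" "C > 0" "U > 0" "\<delta> > 0" "L > 0"
    and "L > 2*\<delta>*U / (1 - A/(p*C))"
  shows "A \<le> (1 - 2*\<delta>/(L/U)) * p * C"
proof -
  define e where "e = 1 - A/(p*C)"
  have e: "e > 0" using assms unfolding e_def by (simp add: divide_less_eq)
  have "2*\<delta>*U < e*L" using assms(7) e unfolding e_def[symmetric] by (simp add: divide_less_eq mult.commute)
  hence "2*\<delta>*U/L < e" using assms by (simp add: divide_less_eq mult.commute)
  moreover have "2*\<delta>/(L/U) = 2*\<delta>*U/L" by simp
  ultimately have "A/(p*C) < 1 - 2*\<delta>/(L/U)" unfolding e_def by linarith
  hence "A < (1 - 2*\<delta>/(L/U)) * (p*C)" using assms by (simp add: divide_less_eq)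
  thus ?thesis by (simp add: mult.assoc)
qed

lemma big_bound:
  fixes A p C U \<delta> L :: real
  assumes "A < C" "p > 0" "C > 0" "U > 0" "\<delta> > 0" "L > 0"
    and "L > 2*\<delta>*(p*U) / (1 - A/C)"
  shows "2*\<delta> < (1 - A/C)*L/(p*U)"
proof -
  define e where "e = 1 - A/C"
  have e: "e > 0" using assms unfolding e_def by (simp add: divide_less_eq)
  have "2*\<delta>*(p*U) < e*L" using assms(7) e unfolding e_def[symmetric] by (simp add: divide_less_eq mult.commute)
  thus ?thesis using assms unfolding e_def[symmetric] by (simp add: less_divide_eq)
qed



lemma main_L:
  fixes V W K k0 \<delta> pi0 L :: real
  assumes V: "V > 0" and W: "W > 0" and K: "K > 0"
    and k0: "0 < k0" "k0 < K"
    and d: "\<delta> > 0"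
    and p: "0 < pi0" "pi0 < 1"
    and L: "L > 0"
    and M1: "L > 2*\<delta>*V / (1 - V*k0/(pi0*Cap V W K))"
    and M2: "L > 2*\<delta>*(pi0*V) / (1 - V*k0/Cap V W K)"
    and M3: "L > 2*\<delta>*(pi0*W) / (1 - (K-k0)*W/Cap V W K)"
    and M4: "L > 2*\<delta>*W / (1 - (K-k0)*W/(pi0*Cap V W K))"
  shows "(congestion V W K k0 < pi0 \<longrightarrow>
       {T. optimal_cycle V W K k0 L \<delta> pi0 T} =
       {T. \<exists>j::nat. j > 0 \<and> T = L / (real j * V) \<and>
             V * k0 \<le> (1 - 2 * \<delta> / T) * pi0 * Cap V W K}) \<and>
    (pi0 \<le> congestion V W K k0 \<and> congestion V W K k0 < 1 \<longrightarrow>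
       {T. optimal_cycle V W K k0 L \<delta> pi0 T} =
       {congestion V W K k0 * L / (pi0 * V) + 2 * \<delta>}) \<and>
    (congestion V W K k0 = 1 \<longrightarrow>
       {T. optimal_cycle V W K k0 L \<delta> pi0 T} = {} \<and>
       ((\<lambda>T. objective V W K k0 L \<delta> pi0 T) \<longlongrightarrow>
          (SUP T\<in>{2 * \<delta>..}. objective V W K k0 L \<delta> pi0 T)) at_top) \<and>
    (1 < congestion V W K k0 \<and> congestion V W K k0 \<le> 1 / pi0 \<longrightarrow>
       {T. optimal_cycle V W K k0 L \<delta> pi0 T} =
       {(1 / congestion V W K k0) * L / (pi0 * W) + 2 * \<delta>}) \<and>
    (1 / pi0 < congestion V W K k0 \<longrightarrow>
       {T. optimal_cycle V W K k0 L \<delta> pi0 T} =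
       {T. \<exists>j::nat. j > 0 \<and> T = L / (real j * W) \<and>
             (K - k0) * W \<le> (1 - 2 * \<delta> / T) * pi0 * Cap V W K})"
proof -
  have C: "Cap V W K > 0" using Cap_pos V W K by blast
  have OSeq: "{T. optimal_cycle V W K k0 L \<delta> pi0 T} = {T. 2*\<delta> \<le> T \<and> (\<forall>T'. 2*\<delta> \<le> T' \<longrightarrow> objective V W K k0 L \<delta> pi0 T' \<le> objective V W K k0 L \<delta> pi0 T)}"
    unfolding optimal_cycle_def by simp
  have A0: "V*k0 > 0" using V k0 by simp
  have B0: "(K-k0)*W > 0" using W k0 by simp
  have ip: "1 < 1/pi0" using p by simp
  consider (lt) "k0 < Kbar V W K" | (eq) "k0 = Kbar V W K" | (gt) "k0 > Kbar V W K" by linarith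
  then show ?thesis
  proof cases
    case lt
    have "V*k0 < V*Kbar V W K" using lt V by simp
    hence AC: "V*k0 < Cap V W K" using CapKbar(1)[OF V W, of K] by simp
    have "W*k0 < W*Kbar V W K" using lt W by simp
    hence BC: "(K-k0)*W > Cap V W K" using CapKbar(2)[OF V W, of K] by (simp add: algebra_simps)
    have chi: "congestion V W K k0 = V*k0 / Cap V W K"
      unfolding congestion_def using AC BC by simp
    have chi1: "congestion V W K k0 < 1" using chi AC C by simp
    have hh: "\<And>T. 2*\<delta> \<le> T \<Longrightarrow> objective V W K k0 L \<delta> pi0 T = min (V*k0 * FF pi0 (L/(V*T))) ((1 - 2*\<delta>/T)*pi0*Cap V W K)"
      using obj_lt[OF V W K L _ d p lt] by simp
    have c1: "congestion V W K k0 < pi0 \<longrightarrow>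
       {T. optimal_cycle V W K k0 L \<delta> pi0 T} =
       {T. \<exists>j::nat. j > 0 \<and> T = L / (real j * V) \<and>
             V * k0 \<le> (1 - 2 * \<delta> / T) * pi0 * Cap V W K}"
    proof
      assume "congestion V W K k0 < pi0"
      hence Ap: "V*k0 < pi0 * Cap V W K" using chi C by (simp add: divide_less_eq mult.commute)
      have feas: "V*k0 \<le> (1 - 2*\<delta>/(L/V)) * pi0 * Cap V W K"
        using feas_bound[OF Ap p(1) C V d L M1] .
      show "{T. optimal_cycle V W K k0 L \<delta> pi0 T} =
       {T. \<exists>j::nat. j > 0 \<and> T = L / (real j * V) \<and>
             V * k0 \<le> (1 - 2 * \<delta> / T) * pi0 * Cap V W K}"
        unfolding OSeq using opt_multi[OF V L A0 C p d hh feas] .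
    qed
    have c2: "pi0 \<le> congestion V W K k0 \<and> congestion V W K k0 < 1 \<longrightarrow>
       {T. optimal_cycle V W K k0 L \<delta> pi0 T} =
       {congestion V W K k0 * L / (pi0 * V) + 2 * \<delta>}"
    proof
      assume "pi0 \<le> congestion V W K k0 \<and> congestion V W K k0 < 1"
      hence pA: "pi0 * Cap V W K \<le> V*k0" using chi C by (simp add: le_divide_eq mult.commute)
      have big: "2*\<delta> < (1 - V*k0/Cap V W K)*L/(pi0*V)"
        using big_bound[OF AC p(1) C V d L M2] .
      show "{T. optimal_cycle V W K k0 L \<delta> pi0 T} =
       {congestion V W K k0 * L / (pi0 * V) + 2 * \<delta>}"
        unfolding OSeq chi using opt_unique[OF V L A0 C p d hh pA AC big] .
    qed
    show ?thesis using c1 c2 chi1 ip by auto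
  next
    case eq
    have AC: "V*k0 = Cap V W K" using CapKbar(1)[OF V W, of K] eq by simp
    have BC: "(K-k0)*W = Cap V W K" using CapKbar(2)[OF V W, of K] eq by (simp add: algebra_simps)
    have chi: "congestion V W K k0 = 1"
      unfolding congestion_def using AC BC C by simp
    have hh: "\<And>T. 2*\<delta> \<le> T \<Longrightarrow> objective V W K k0 L \<delta> pi0 T = (1 - 2*\<delta>/T)*pi0*Cap V W K"
      using obj_eqc[OF V W K L _ d p eq] by simp
    have incr: "objective V W K k0 L \<delta> pi0 T < objective V W K k0 L \<delta> pi0 T'"
      if "2*\<delta> \<le> T" "T < T'" for T T'
    proof -
      have T0: "T > 0" using that d by linarith
      have "2*\<delta>/T' < 2*\<delta>/T" using that T0 d by (simp add: frac_less2)
      hence "(1 - 2*\<delta>/T)*pi0*Cap V W K < (1 - 2*\<delta>/T')*pi0*Cap V W K" using p C by simp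
      thus ?thesis using hh[OF that(1)] hh[of T'] that by simp
    qed
    have empty: "{T. optimal_cycle V W K k0 L \<delta> pi0 T} = {}"
    proof (rule equals0I)
      fix T assume "T \<in> {T. optimal_cycle V W K k0 L \<delta> pi0 T}"
      hence T2: "2*\<delta> \<le> T" and opt: "\<And>T'. 2*\<delta> \<le> T' \<Longrightarrow> objective V W K k0 L \<delta> pi0 T' \<le> objective V W K k0 L \<delta> pi0 T"
        unfolding optimal_cycle_def by (simp_all only: mem_Collect_eq)
      have "objective V W K k0 L \<delta> pi0 (T+1) \<le> objective V W K k0 L \<delta> pi0 T" using opt T2 by simp
      moreover have "objective V W K k0 L \<delta> pi0 T < objective V W K k0 L \<delta> pi0 (T+1)" using incr T2 by simp
      ultimately show False by linarith
    qed
    have lim0: "((\<lambda>T::real. 2*\<delta>/T) \<longlongrightarrow> 0) at_top"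
      by (rule tendsto_divide_0[OF tendsto_const filterlim_at_top_imp_at_infinity[OF filterlim_ident]])
    have lim1: "((\<lambda>T. (1 - 2*\<delta>/T)*pi0*Cap V W K) \<longlongrightarrow> (1 - 0)*pi0*Cap V W K) at_top"
      by (intro tendsto_intros lim0)
    have ev: "\<forall>\<^sub>F T in at_top. (1 - 2*\<delta>/T)*pi0*Cap V W K = objective V W K k0 L \<delta> pi0 T"
      using eventually_ge_at_top[of "2*\<delta>"] by eventually_elim (simp add: hh)
    have lim: "((\<lambda>T. objective V W K k0 L \<delta> pi0 T) \<longlongrightarrow> pi0*Cap V W K) at_top"
      using tendsto_cong[OF ev] lim1 by simp
    have bdd: "bdd_above ((\<lambda>T. objective V W K k0 L \<delta> pi0 T) ` {2*\<delta>..})"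
    proof (rule bdd_aboveI2)
      fix T assume "T \<in> {2*\<delta>..}"
      hence "2*\<delta> \<le> T" by simp
      thus "objective V W K k0 L \<delta> pi0 T \<le> pi0*Cap V W K" using hh sle[OF _ d p(1) C] by simp
    qed
    have S1: "(SUP T\<in>{2 * \<delta>..}. objective V W K k0 L \<delta> pi0 T) \<le> pi0*Cap V W K"
    proof (rule cSUP_least)
      show "{2*\<delta>..} \<noteq> {}" by simp
      fix T assume "T \<in> {2*\<delta>..}"
      hence "2*\<delta> \<le> T" by simp
      thus "objective V W K k0 L \<delta> pi0 T \<le> pi0*Cap V W K" using hh sle[OF _ d p(1) C] by simp
    qed
    have S2: "pi0*Cap V W K \<le> (SUP T\<in>{2 * \<delta>..}. objective V W K k0 L \<delta> pi0 T)"
    proof (rule tendsto_upperbound[OF lim])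
      show "\<forall>\<^sub>F T in at_top. objective V W K k0 L \<delta> pi0 T \<le> (SUP T\<in>{2 * \<delta>..}. objective V W K k0 L \<delta> pi0 T)"
        using eventually_ge_at_top[of "2*\<delta>"] by eventually_elim (rule cSUP_upper[OF _ bdd], simp)
    qed simp
    have "(SUP T\<in>{2 * \<delta>..}. objective V W K k0 L \<delta> pi0 T) = pi0*Cap V W K" using S1 S2 by linarith
    hence c3: "((\<lambda>T. objective V W K k0 L \<delta> pi0 T) \<longlongrightarrow>
          (SUP T\<in>{2 * \<delta>..}. objective V W K k0 L \<delta> pi0 T)) at_top" using lim by simp
    show ?thesis using empty c3 chi p ip by auto
  next
    case gt
    have "V*k0 > V*Kbar V W K" using gt V by simp
    hence AC: "V*k0 > Cap V W K" using CapKbar(1)[OF V W, of K] by simp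
    have "W*k0 > W*Kbar V W K" using gt W by simp
    hence BC: "(K-k0)*W < Cap V W K" using CapKbar(2)[OF V W, of K] by (simp add: algebra_simps)
    have chi: "congestion V W K k0 = Cap V W K / ((K-k0)*W)"
      unfolding congestion_def using AC BC by simp
    have chi1: "congestion V W K k0 > 1" using chi BC B0 by simp
    have hh: "\<And>T. 2*\<delta> \<le> T \<Longrightarrow> objective V W K k0 L \<delta> pi0 T = min ((K-k0)*W * FF pi0 (L/(W*T))) ((1 - 2*\<delta>/T)*pi0*Cap V W K)"
      using obj_gt[OF V W K L _ d p gt] by simp
    have c5: "1 / pi0 < congestion V W K k0 \<longrightarrow>
       {T. optimal_cycle V W K k0 L \<delta> pi0 T} =
       {T. \<exists>j::nat. j > 0 \<and> T = L / (real j * W) \<and>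
             (K - k0) * W \<le> (1 - 2 * \<delta> / T) * pi0 * Cap V W K}"
    proof
      assume "1 / pi0 < congestion V W K k0"
      hence Ap: "(K-k0)*W < pi0 * Cap V W K" using chi B0 p by (simp add: field_simps)
      have feas: "(K-k0)*W \<le> (1 - 2*\<delta>/(L/W)) * pi0 * Cap V W K"
        using feas_bound[OF Ap p(1) C W d L M4] .
      show "{T. optimal_cycle V W K k0 L \<delta> pi0 T} =
       {T. \<exists>j::nat. j > 0 \<and> T = L / (real j * W) \<and>
             (K - k0) * W \<le> (1 - 2 * \<delta> / T) * pi0 * Cap V W K}"
        unfolding OSeq using opt_multi[OF W L B0 C p d hh feas] .
    qed
    have c4: "1 < congestion V W K k0 \<and> congestion V W K k0 \<le> 1 / pi0 \<longrightarrow>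
       {T. optimal_cycle V W K k0 L \<delta> pi0 T} =
       {(1 / congestion V W K k0) * L / (pi0 * W) + 2 * \<delta>}"
    proof
      assume "1 < congestion V W K k0 \<and> congestion V W K k0 \<le> 1 / pi0"
      hence pA: "pi0 * Cap V W K \<le> (K-k0)*W" using chi B0 p by (simp add: field_simps)
      have big: "2*\<delta> < (1 - (K-k0)*W/Cap V W K)*L/(pi0*W)"
        using big_bound[OF BC p(1) C W d L M3] .
      have ic: "1 / congestion V W K k0 = (K-k0)*W / Cap V W K" using chi by simp
      show "{T. optimal_cycle V W K k0 L \<delta> pi0 T} =
       {(1 / congestion V W K k0) * L / (pi0 * W) + 2 * \<delta>}"
        unfolding OSeq ic using opt_unique[OF W L B0 C p d hh pA BC big] .
    qed
    have "\<not> congestion V W K k0 < pi0" using chi1 p by simp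
    thus ?thesis using c4 c5 chi1 by auto
  qed
qed

theorem corollary4p2:
  fixes V W K k0 \<delta> pi0 :: real
  assumes "V > 0" and "W > 0" and "K > 0"
    and "0 < k0" and "k0 < K"
    and "\<delta> > 0"
    and "0 < pi0" and "pi0 < 1"
  shows "\<forall>\<^sub>F L in at_top.
    (congestion V W K k0 < pi0 \<longrightarrow>
       {T. optimal_cycle V W K k0 L \<delta> pi0 T} =
       {T. \<exists>j::nat. j > 0 \<and> T = L / (real j * V) \<and>
             V * k0 \<le> (1 - 2 * \<delta> / T) * pi0 * Cap V W K}) \<and>
    (pi0 \<le> congestion V W K k0 \<and> congestion V W K k0 < 1 \<longrightarrow>
       {T. optimal_cycle V W K k0 L \<delta> pi0 T} =
       {congestion V W K k0 * L / (pi0 * V) + 2 * \<delta>}) \<and>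
    (congestion V W K k0 = 1 \<longrightarrow>
       {T. optimal_cycle V W K k0 L \<delta> pi0 T} = {} \<and>
       ((\<lambda>T. objective V W K k0 L \<delta> pi0 T) \<longlongrightarrow>
          (SUP T\<in>{2 * \<delta>..}. objective V W K k0 L \<delta> pi0 T)) at_top) \<and>
    (1 < congestion V W K k0 \<and> congestion V W K k0 \<le> 1 / pi0 \<longrightarrow>
       {T. optimal_cycle V W K k0 L \<delta> pi0 T} =
       {(1 / congestion V W K k0) * L / (pi0 * W) + 2 * \<delta>}) \<and>
    (1 / pi0 < congestion V W K k0 \<longrightarrow>
       {T. optimal_cycle V W K k0 L \<delta> pi0 T} =
       {T. \<exists>j::nat. j > 0 \<and> T = L / (real j * W) \<and>
             (K - k0) * W \<le> (1 - 2 * \<delta> / T) * pi0 * Cap V W K})"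
  proof -
  define L0 where "L0 = max 0 (max (max (2*\<delta>*V / (1 - V*k0/(pi0*Cap V W K))) (2*\<delta>*(pi0*V) / (1 - V*k0/Cap V W K)))
     (max (2*\<delta>*(pi0*W) / (1 - (K-k0)*W/Cap V W K)) (2*\<delta>*W / (1 - (K-k0)*W/(pi0*Cap V W K)))))"
  have ev: "\<forall>\<^sub>F L in at_top. L > 0 \<and> L > 2*\<delta>*V / (1 - V*k0/(pi0*Cap V W K)) \<and> L > 2*\<delta>*(pi0*V) / (1 - V*k0/Cap V W K) \<and>
      L > 2*\<delta>*(pi0*W) / (1 - (K-k0)*W/Cap V W K) \<and> L > 2*\<delta>*W / (1 - (K-k0)*W/(pi0*Cap V W K))"
    using eventually_gt_at_top[of L0] by eventually_elim (simp add: L0_def)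
  show ?thesis
    apply (rule eventually_mono[OF ev])
    apply (rule main_L[OF assms])
    apply (elim conjE; assumption)+
    done
qed

end
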